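(* Let $R$ be a simple Bezout domain. Then $R$ is a D-K elementary divisor ring if and only if for every nonzero $a\in R$ there exist $u_1,u_2,v_1,v_2\in R$ such that $u_1av_1+u_2av_2=1$.
   Context: All rings are associative with nonzero identity. A simple ring is one with no two-sided ideals other than $0$ and $R$. A Bezout domain is a domain in which every finitely generated right ideal and every finitely generated left ideal is principal. A nonzero element $a$ is invariant if $aR=Ra$. For $x\in R$, $RxR$ denotes the two-sided ideal generated by $x$. Two matrices $A,B$ over $R$ are equivalent if $B=PAQ$ for invertible $P,Q$. $R$ is a D-K elementary divisor ring if every (rectangular) matrix over $R$ is equivalent to a matrix $\mathrm{diag}(\varepsilon_1,\dots,\varepsilon_r,0,\dots,0)$ such that $R\varepsilon_{i+1}R\subseteq \varepsilon_iR\cap R\varepsilon_i$ for $i=1,\dots,r-1$ and $\varepsilon_1,\dots,\varepsilon_{r-1}$ are invariant elements. *)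

theory Defs
  imports "Jordan_Normal_Form.Matrix"
begin

definition two_sided_ideal :: "'a::ring_1 set \<Rightarrow> bool" where
  "two_sided_ideal I \<longleftrightarrow> 0 \<in> I \<and> (\<forall>x\<in>I. \<forall>y\<in>I. x + y \<in> I) \<and> (\<forall>x\<in>I. - x \<in> I)
     \<and> (\<forall>x\<in>I. \<forall>r. r * x \<in> I \<and> x * r \<in> I)"

definition simple_ring :: "'a::ring_1 itself \<Rightarrow> bool" where
  "simple_ring TYPE('a) \<longleftrightarrow> (0::'a) \<noteq> 1 \<and>
     (\<forall>I::'a set. two_sided_ideal I \<longrightarrow> I = {0} \<or> I = UNIV)"

definition is_domain :: "'a::ring_1 itself \<Rightarrow> bool" where
  "is_domain TYPE('a) \<longleftrightarrow> (0::'a) \<noteq> 1 \<and> (\<forall>a b::'a. a * b = 0 \<longrightarrow> a = 0 \<or> b = 0)"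

definition right_ideal_gen :: "'a::ring_1 list \<Rightarrow> 'a set" where
  "right_ideal_gen xs = {\<Sum>i<length xs. xs ! i * r i | r. True}"

definition left_ideal_gen :: "'a::ring_1 list \<Rightarrow> 'a set" where
  "left_ideal_gen xs = {\<Sum>i<length xs. r i * xs ! i | r. True}"

definition bezout_domain :: "'a::ring_1 itself \<Rightarrow> bool" where
  "bezout_domain TYPE('a) \<longleftrightarrow> is_domain TYPE('a) \<and>
     (\<forall>xs::'a list. (\<exists>d. right_ideal_gen xs = {d * r | r. True})
                  \<and> (\<exists>d. left_ideal_gen xs = {r * d | r. True}))"

definition invariant_elem :: "'a::ring_1 \<Rightarrow> bool" where
  "invariant_elem a \<longleftrightarrow> a \<noteq> 0 \<and> {a * r | r. True} = {r * a | r. True}"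

definition two_sided_gen :: "'a::ring_1 \<Rightarrow> 'a set" where
  "two_sided_gen x = {\<Sum>i<n. r i * x * s i | (n::nat) r s. True}"

definition DK_elementary_divisor_ring :: "'a::ring_1 itself \<Rightarrow> bool" where
  "DK_elementary_divisor_ring TYPE('a) \<longleftrightarrow>
     (\<forall>m n (A::'a mat). A \<in> carrier_mat m n \<longrightarrow>
        (\<exists>P Q k (eps::nat \<Rightarrow> 'a).
           P \<in> carrier_mat m m \<and> Q \<in> carrier_mat n n \<and>
           invertible_mat P \<and> invertible_mat Q \<and>
           k \<le> min m n \<and>
           P * A * Q = mat m n (\<lambda>(i, j). if i = j \<and> i < k then eps i else 0) \<and>
           (\<forall>i. i + 1 < k \<longrightarrow>
              two_sided_gen (eps (i + 1)) \<subseteq> {eps i * r | r. True} \<inter> {r * eps i | r. True}) \<and>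
           (\<forall>i. i + 1 < k \<longrightarrow> invariant_elem (eps i))))"

end

theory Submission
  imports Defs
begin

lemma dom_cancel_left:
  fixes a x y :: "'a::ring_1"
  assumes "is_domain TYPE('a)" "a \<noteq> 0" "a * x = a * y"
  shows "x = y"
proof -
  have "a * (x - y) = 0" using assms(3) by (simp add: right_diff_distrib)
  hence "x - y = 0" using assms(1,2) unfolding is_domain_def by blast
  thus ?thesis by simp
qed

lemma dom_cancel_right:
  fixes a x y :: "'a::ring_1"
  assumes "is_domain TYPE('a)" "a \<noteq> 0" "x * a = y * a"
  shows "x = y"
proof -
  have "(x - y) * a = 0" using assms(3) by (simp add: left_diff_distrib)
  hence "x - y = 0" using assms(1,2) unfolding is_domain_def by blast
  thus ?thesis by simp
qed

lemma dom_unit: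
  fixes d z :: "'a::ring_1"
  assumes "is_domain TYPE('a)" "d * z = 1"
  shows "z * d = 1"
proof -
  have d0: "d \<noteq> 0" using assms unfolding is_domain_def by auto
  have "d * (z * d) = d * 1" using assms(2) by (simp add: mult.assoc[symmetric])
  thus ?thesis using dom_cancel_left[OF assms(1) d0] by blast
qed

lemma bezout_right:
  fixes a b :: "'a::ring_1"
  assumes "bezout_domain TYPE('a)"
  shows "\<exists>d a1 b1 x y. a = d * a1 \<and> b = d * b1 \<and> d = a * x + b * y"
proof -
  obtain d where d: "right_ideal_gen [a, b] = {d * r | r. True}"
    using assms unfolding bezout_domain_def by blast
  have "a \<in> right_ideal_gen [a,b]" unfolding right_ideal_gen_def
    by (rule CollectI, rule exI[of _ "\<lambda>i. if i = 0 then 1 else 0"], simp)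
  then obtain a1 where a1: "a = d * a1" using d by auto
  have "b \<in> right_ideal_gen [a,b]" unfolding right_ideal_gen_def
    by (rule CollectI, rule exI[of _ "\<lambda>i. if i = 0 then 0 else 1"], simp)
  then obtain b1 where b1: "b = d * b1" using d by auto
  have "d \<in> right_ideal_gen [a,b]" using d by (auto intro: exI[of _ 1])
  then obtain r where "d = (\<Sum>i<length [a,b]. [a,b] ! i * r i)" unfolding right_ideal_gen_def by blast
  hence "d = a * r 0 + b * r 1" by (simp add: numeral_2_eq_2)
  thus ?thesis using a1 b1 by blast
qed

lemma bezout_left:
  fixes a b :: "'a::ring_1"
  assumes "bezout_domain TYPE('a)"
  shows "\<exists>d a1 b1 x y. a = a1 * d \<and> b = b1 * d \<and> d = x * a + y * b"
proof -
  obtain d where d: "left_ideal_gen [a, b] = {r * d | r. True}"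
    using assms unfolding bezout_domain_def by blast
  have "a \<in> left_ideal_gen [a,b]" unfolding left_ideal_gen_def
    by (rule CollectI, rule exI[of _ "\<lambda>i. if i = 0 then 1 else 0"], simp)
  then obtain a1 where a1: "a = a1 * d" using d by auto
  have "b \<in> left_ideal_gen [a,b]" unfolding left_ideal_gen_def
    by (rule CollectI, rule exI[of _ "\<lambda>i. if i = 0 then 0 else 1"], simp)
  then obtain b1 where b1: "b = b1 * d" using d by auto
  have "d \<in> left_ideal_gen [a,b]" using d by (auto intro: exI[of _ 1])
  then obtain r where "d = (\<Sum>i<length [a,b]. r i * [a,b] ! i)" unfolding left_ideal_gen_def by blast
  hence "d = r 0 * a + r 1 * b" by (simp add: numeral_2_eq_2)
  thus ?thesis using a1 b1 by blast
qed

section \<open>2x2 matrices\<close>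

definition mk2 :: "'a \<Rightarrow> 'a \<Rightarrow> 'a \<Rightarrow> 'a \<Rightarrow> 'a mat" where
  "mk2 p q r s = mat 2 2 (\<lambda>(i,j). if i = 0 then (if j = 0 then p else q) else (if j = 0 then r else s))"

lemma mk2_carrier[simp]: "mk2 p q r s \<in> carrier_mat 2 2"
  by (simp add: mk2_def)

lemma mk2_index[simp]:
  "mk2 p q r s $$ (0,0) = p" "mk2 p q r s $$ (0,1) = q"
  "mk2 p q r s $$ (1,0) = r" "mk2 p q r s $$ (1,1) = s"
  "mk2 p q r s $$ (0,Suc 0) = q"
  "mk2 p q r s $$ (Suc 0,0) = r" "mk2 p q r s $$ (Suc 0,Suc 0) = s"
  by (simp_all add: mk2_def)

lemma mk2_dims[simp]: "dim_row (mk2 p q r s) = 2" "dim_col (mk2 p q r s) = 2"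
  by (simp_all add: mk2_def)

lemma mat2_eq_mk2:
  assumes "X \<in> carrier_mat 2 2"
  shows "X = mk2 (X $$ (0,0)) (X $$ (0,1)) (X $$ (1,0)) (X $$ (1,1))"
proof (rule eq_matI)
  fix i j assume "i < dim_row (mk2 (X $$ (0,0)) (X $$ (0,1)) (X $$ (1,0)) (X $$ (1,1)))"
    "j < dim_col (mk2 (X $$ (0,0)) (X $$ (0,1)) (X $$ (1,0)) (X $$ (1,1)))"
  hence "i < 2" "j < 2" by auto
  hence "i = 0 \<or> i = 1" "j = 0 \<or> j = 1" by auto
  thus "X $$ (i,j) = mk2 (X $$ (0,0)) (X $$ (0,1)) (X $$ (1,0)) (X $$ (1,1)) $$ (i,j)" by auto
qed (use assms in auto)

lemma mult2_index:
  fixes X Y :: "'a::ring_1 mat"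
  assumes "X \<in> carrier_mat 2 2" "Y \<in> carrier_mat 2 2" "a < 2" "b < 2"
  shows "(X * Y) $$ (a,b) = X $$ (a,0) * Y $$ (0,b) + X $$ (a,1) * Y $$ (1,b)"
  using assms by (simp add: scalar_prod_def numeral_2_eq_2)

lemma mk2_mult:
  fixes p q r s p' q' r' s' :: "'a::ring_1"
  shows "mk2 p q r s * mk2 p' q' r' s' = mk2 (p*p' + q*r') (p*q' + q*s') (r*p' + s*r') (r*q' + s*s')"
proof (rule eq_matI)
  fix i j assume "i < dim_row (mk2 (p*p' + q*r') (p*q' + q*s') (r*p' + s*r') (r*q' + s*s'))"
    "j < dim_col (mk2 (p*p' + q*r') (p*q' + q*s') (r*p' + s*r') (r*q' + s*s'))"
  hence "i < 2" "j < 2" by auto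
  hence "i = 0 \<or> i = 1" "j = 0 \<or> j = 1" by auto
  thus "(mk2 p q r s * mk2 p' q' r' s') $$ (i,j) = mk2 (p*p' + q*r') (p*q' + q*s') (r*p' + s*r') (r*q' + s*s') $$ (i,j)"
    by (auto simp: mk2_def scalar_prod_def numeral_2_eq_2)
qed auto

lemma one2: "(1\<^sub>m 2 :: 'a::ring_1 mat) = mk2 1 0 0 1"
  by (rule mat2_eq_mk2[THEN trans], auto)

lemma invertible_inv:
  fixes P :: "'a::ring_1 mat"
  assumes "invertible_mat P" "P \<in> carrier_mat n n"
  shows "\<exists>P'. P' \<in> carrier_mat n n \<and> P * P' = 1\<^sub>m n \<and> P' * P = 1\<^sub>m n"
proof -
  obtain B where B: "P * B = 1\<^sub>m n" "B * P = 1\<^sub>m (dim_row B)"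
    using assms unfolding invertible_mat_def inverts_mat_def by auto
  have "dim_col B = n" using B(1) assms(2) by (metis index_mult_mat(3) index_one_mat(3))
  moreover have "dim_row B = n" using B(2) assms(2) by (metis index_mult_mat(3) index_one_mat(3) carrier_matD(2))
  ultimately show ?thesis using B by (intro exI[of _ B]) auto
qed

lemma invertibleI:
  fixes P :: "'a::ring_1 mat"
  assumes "P \<in> carrier_mat n n" "P' \<in> carrier_mat n n" "P * P' = 1\<^sub>m n" "P' * P = 1\<^sub>m n"
  shows "invertible_mat P"
  using assms unfolding invertible_mat_def inverts_mat_def square_mat.simps by auto

lemma invertible_one: "invertible_mat (1\<^sub>m n :: 'a::ring_1 mat)"
  by (rule invertibleI[of _ n "1\<^sub>m n"]) auto

lemma invertible_mult:
  fixes P Q :: "'a::ring_1 mat"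
  assumes "invertible_mat P" "invertible_mat Q" "P \<in> carrier_mat n n" "Q \<in> carrier_mat n n"
  shows "invertible_mat (P * Q)"
proof -
  obtain P' where P': "P' \<in> carrier_mat n n" "P * P' = 1\<^sub>m n" "P' * P = 1\<^sub>m n"
    using invertible_inv[OF assms(1,3)] by auto
  obtain Q' where Q': "Q' \<in> carrier_mat n n" "Q * Q' = 1\<^sub>m n" "Q' * Q = 1\<^sub>m n"
    using invertible_inv[OF assms(2,4)] by auto
  have e1: "(P * Q) * (Q' * P') = P * (Q * (Q' * P'))"
    by (rule assoc_mult_mat) (use assms P' Q' in auto)
  have e2: "Q * (Q' * P') = (Q * Q') * P'"
    by (rule assoc_mult_mat[symmetric]) (use assms P' Q' in auto)
  have 1: "(P * Q) * (Q' * P') = 1\<^sub>m n" unfolding e1 e2 using P' Q' assms by (simp del: assoc_mult_mat)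
  have e3: "(Q' * P') * (P * Q) = Q' * (P' * (P * Q))"
    by (rule assoc_mult_mat) (use assms P' Q' in auto)
  have e4: "P' * (P * Q) = (P' * P) * Q"
    by (rule assoc_mult_mat[symmetric]) (use assms P' Q' in auto)
  have 2: "(Q' * P') * (P * Q) = 1\<^sub>m n" unfolding e3 e4 using P' Q' assms by (simp del: assoc_mult_mat)
  show ?thesis by (rule invertibleI[OF _ _ 1 2]) (use assms P' Q' in auto)
qed

lemma invertible_mk2:
  fixes p q r s p' q' r' s' :: "'a::ring_1"
  assumes "p*p' + q*r' = 1" "p*q' + q*s' = 0" "r*p' + s*r' = 0" "r*q' + s*s' = 1"
     "p'*p + q'*r = 1" "p'*q + q'*s = 0" "r'*p + s'*r = 0" "r'*q + s'*s = 1"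
  shows "invertible_mat (mk2 p q r s)"
  by (rule invertibleI[of _ 2 "mk2 p' q' r' s'"], auto simp: mk2_mult assms one2)


lemma mk2_eqD:
  assumes "mk2 p q r s = mk2 p' q' r' s'"
  shows "p = p'" "q = q'" "r = r'" "s = s'"
  using arg_cong[OF assms, of "\<lambda>M. M $$ (0,0)"] arg_cong[OF assms, of "\<lambda>M. M $$ (0,1)"]
    arg_cong[OF assms, of "\<lambda>M. M $$ (1,0)"] arg_cong[OF assms, of "\<lambda>M. M $$ (1,1)"]
  by simp_all

lemma dom_nontriv: "is_domain TYPE('a::ring_1) \<Longrightarrow> (0::'a) \<noteq> 1"
  unfolding is_domain_def by auto

lemma dom_mult_nz: "is_domain TYPE('a::ring_1) \<Longrightarrow> (a::'a) \<noteq> 0 \<Longrightarrow> b \<noteq> 0 \<Longrightarrow> a * b \<noteq> 0"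
  unfolding is_domain_def by auto

lemma R1:
  fixes a b :: "'a::ring_1"
  assumes dom: "is_domain TYPE('a)" and bez: "bezout_domain TYPE('a)"
  shows "\<exists>x s0 y t0. invertible_mat (mk2 x s0 y t0) \<and> a * s0 + b * t0 = 0"
proof (cases "b = 0")
  case True
  thus ?thesis by (intro exI[of _ 1] exI[of _ 0]) (simp add: one2[symmetric] invertible_one)
next
  case False
  obtain d a1 b1 x y where ab: "a = d * a1" "b = d * b1" "d = a * x + b * y"
    using bezout_right[OF bez] by blast
  have d0: "d \<noteq> 0" using False ab(2) by auto
  have "d * (a1 * x + b1 * y) = (d * a1) * x + (d * b1) * y" by (simp add: algebra_simps)
  also have "\<dots> = d * 1" unfolding ab(1,2)[symmetric] using ab(3) by simp
  finally have "d * (a1 * x + b1 * y) = d * 1" .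
  hence h1: "a1 * x + b1 * y = 1" using dom_cancel_left[OF dom d0] by blast
  have b10: "b1 \<noteq> 0" using False ab(2) by auto
  obtain s0 c e z1 z2 where sc: "1 - x * a1 = s0 * c" "- (x * b1) = s0 * e"
     "s0 = (1 - x * a1) * z1 + (- (x * b1)) * z2"
    using bezout_right[OF bez, of "1 - x * a1" "- (x * b1)"] by blast
  define t0 where "t0 = - (y * a1) * z1 + (1 - y * b1) * z2"
  have k1: "a1 * (1 - x * a1) + b1 * (- (y * a1)) = 0"
  proof -
    have "a1 * (1 - x * a1) + b1 * (- (y * a1)) = (1 - (a1 * x + b1 * y)) * a1"
      by (simp add: algebra_simps)
    thus ?thesis using h1 by simp
  qed
  have k2: "a1 * (- (x * b1)) + b1 * (1 - y * b1) = 0"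
  proof -
    have "a1 * (- (x * b1)) + b1 * (1 - y * b1) = (1 - (a1 * x + b1 * y)) * b1"
      by (simp add: algebra_simps)
    thus ?thesis using h1 by simp
  qed
  have K: "a1 * s0 + b1 * t0 = 0"
  proof -
    have "a1 * s0 + b1 * t0 = (a1 * (1 - x * a1) + b1 * (- (y * a1))) * z1
       + (a1 * (- (x * b1)) + b1 * (1 - y * b1)) * z2"
      unfolding sc(3) t0_def by (simp add: algebra_simps)
    thus ?thesis using k1 k2 by simp
  qed
  have K': "a1 * s0 = - (b1 * t0)" using K by (simp add: eq_neg_iff_add_eq_0)
  have ce: "- (y * a1) = t0 * c"
  proof -
    have "b1 * (- (y * a1)) = - (a1 * (1 - x * a1))" using k1 by (simp add: eq_neg_iff_add_eq_0 add.commute)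
    also have "\<dots> = - (a1 * s0 * c)" using sc(1) by (simp add: mult.assoc)
    also have "\<dots> = b1 * (t0 * c)" using K' by (simp add: mult.assoc)
    finally show ?thesis using dom_cancel_left[OF dom b10] by blast
  qed
  have ee: "1 - y * b1 = t0 * e"
  proof -
    have "b1 * (1 - y * b1) = - (a1 * (- (x * b1)))" using k2 by (simp add: eq_neg_iff_add_eq_0 add.commute)
    also have "\<dots> = - (a1 * s0 * e)" using sc(2) by (simp add: mult.assoc)
    also have "\<dots> = b1 * (t0 * e)" using K' by (simp add: mult.assoc)
    finally show ?thesis using dom_cancel_left[OF dom b10] by blast
  qed
  have s00: "s0 \<noteq> 0"
  proof
    assume "s0 = 0"
    hence "x * a1 = 1" "x * b1 = 0" using sc(1,2) by auto
    hence "x = 0" using dom b10 unfolding is_domain_def by blast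
    thus False using \<open>x * a1 = 1\<close> dom_nontriv[OF dom] by simp
  qed
  have i1: "x * a1 + s0 * c = 1" using sc(1)[symmetric] by simp
  have i2: "x * b1 + s0 * e = 0" using sc(2)[symmetric] by simp
  have i3: "y * a1 + t0 * c = 0" using ce[symmetric] by simp
  have i4: "y * b1 + t0 * e = 1" using ee[symmetric] by simp
  have i7: "c * x + e * y = 0"
  proof -
    have "s0 * (c * x + e * y) = (s0 * c) * x + (s0 * e) * y" by (simp add: algebra_simps)
    also have "\<dots> = x * (1 - (a1 * x + b1 * y))" unfolding sc(1,2)[symmetric] by (simp add: algebra_simps)
    also have "\<dots> = s0 * 0" using h1 by simp
    finally show ?thesis using dom_cancel_left[OF dom s00] by blast
  qed
  have i8: "c * s0 + e * t0 = 1"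
  proof -
    have "s0 * (c * s0 + e * t0) = (s0 * c) * s0 + (s0 * e) * t0" by (simp add: algebra_simps)
    also have "\<dots> = s0 - x * (a1 * s0 + b1 * t0)" unfolding sc(1,2)[symmetric] by (simp add: algebra_simps)
    also have "\<dots> = s0 * 1" using K by simp
    finally show ?thesis using dom_cancel_left[OF dom s00] by blast
  qed
  have inv: "invertible_mat (mk2 x s0 y t0)"
    by (rule invertible_mk2[where p'=a1 and q'=b1 and r'=c and s'=e]) (fact i1 i2 i3 i4 i7 i8 h1 K)+
  have "a * s0 + b * t0 = d * (a1 * s0 + b1 * t0)" using ab(1,2) by (simp add: algebra_simps)
  thus ?thesis using inv K by auto
qed

lemma R2:
  fixes a b :: "'a::ring_1"
  assumes dom: "is_domain TYPE('a)" and bez: "bezout_domain TYPE('a)"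
  shows "\<exists>x y s0 t0. invertible_mat (mk2 x y s0 t0) \<and> s0 * a + t0 * b = 0"
proof (cases "b = 0")
  case True
  thus ?thesis by (intro exI[of _ 1] exI[of _ 0]) (simp add: one2[symmetric] invertible_one)
next
  case False
  obtain d a1 b1 x y where ab: "a = a1 * d" "b = b1 * d" "d = x * a + y * b"
    using bezout_left[OF bez] by blast
  have d0: "d \<noteq> 0" using False ab(2) by auto
  have "(x * a1 + y * b1) * d = x * (a1 * d) + y * (b1 * d)" by (simp add: algebra_simps)
  also have "\<dots> = 1 * d" unfolding ab(1,2)[symmetric] using ab(3) by simp
  finally have "(x * a1 + y * b1) * d = 1 * d" .
  hence h1: "x * a1 + y * b1 = 1" using dom_cancel_right[OF dom d0] by blast
  have b10: "b1 \<noteq> 0" using False ab(2) by auto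
  obtain s0 c e z1 z2 where sc: "1 - a1 * x = c * s0" "- (b1 * x) = e * s0"
     "s0 = z1 * (1 - a1 * x) + z2 * (- (b1 * x))"
    using bezout_left[OF bez, of "1 - a1 * x" "- (b1 * x)"] by blast
  define t0 where "t0 = z1 * (- (a1 * y)) + z2 * (1 - b1 * y)"
  have k1: "(1 - a1 * x) * a1 + (- (a1 * y)) * b1 = 0"
  proof -
    have "(1 - a1 * x) * a1 + (- (a1 * y)) * b1 = a1 * (1 - (x * a1 + y * b1))"
      by (simp add: algebra_simps)
    thus ?thesis using h1 by simp
  qed
  have k2: "(- (b1 * x)) * a1 + (1 - b1 * y) * b1 = 0"
  proof -
    have "(- (b1 * x)) * a1 + (1 - b1 * y) * b1 = b1 * (1 - (x * a1 + y * b1))"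
      by (simp add: algebra_simps)
    thus ?thesis using h1 by simp
  qed
  have K: "s0 * a1 + t0 * b1 = 0"
  proof -
    have "s0 * a1 + t0 * b1 = z1 * ((1 - a1 * x) * a1 + (- (a1 * y)) * b1)
       + z2 * ((- (b1 * x)) * a1 + (1 - b1 * y) * b1)"
      unfolding sc(3) t0_def by (simp add: algebra_simps)
    thus ?thesis using k1 k2 by simp
  qed
  have K': "s0 * a1 = - (t0 * b1)" using K by (simp add: eq_neg_iff_add_eq_0)
  have ce: "- (a1 * y) = c * t0"
  proof -
    have "(- (a1 * y)) * b1 = - ((1 - a1 * x) * a1)" using k1 by (simp add: eq_neg_iff_add_eq_0 add.commute)
    also have "\<dots> = - (c * (s0 * a1))" using sc(1) by (simp add: mult.assoc)
    also have "\<dots> = (c * t0) * b1" using K' by (simp add: mult.assoc)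
    finally show ?thesis using dom_cancel_right[OF dom b10] by blast
  qed
  have ee: "1 - b1 * y = e * t0"
  proof -
    have "(1 - b1 * y) * b1 = - ((- (b1 * x)) * a1)" using k2 by (simp add: eq_neg_iff_add_eq_0 add.commute)
    also have "\<dots> = - (e * (s0 * a1))" using sc(2) by (simp add: mult.assoc)
    also have "\<dots> = (e * t0) * b1" using K' by (simp add: mult.assoc)
    finally show ?thesis using dom_cancel_right[OF dom b10] by blast
  qed
  have s00: "s0 \<noteq> 0"
  proof
    assume "s0 = 0"
    hence "a1 * x = 1" "b1 * x = 0" using sc(1,2) by auto
    hence "x = 0" using dom b10 unfolding is_domain_def by blast
    thus False using \<open>a1 * x = 1\<close> dom_nontriv[OF dom] by simp
  qed
  have i1: "a1 * x + c * s0 = 1" using sc(1)[symmetric] by simp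
  have i2: "b1 * x + e * s0 = 0" using sc(2)[symmetric] by simp
  have i3: "a1 * y + c * t0 = 0" using ce[symmetric] by simp
  have i4: "b1 * y + e * t0 = 1" using ee[symmetric] by simp
  have i7: "x * c + y * e = 0"
  proof -
    have "(x * c + y * e) * s0 = x * (c * s0) + y * (e * s0)" by (simp add: algebra_simps)
    also have "\<dots> = (1 - (x * a1 + y * b1)) * x" unfolding sc(1,2)[symmetric] by (simp add: algebra_simps)
    also have "\<dots> = 0 * s0" using h1 by simp
    finally show ?thesis using dom_cancel_right[OF dom s00] by blast
  qed
  have i8: "s0 * c + t0 * e = 1"
  proof -
    have "(s0 * c + t0 * e) * s0 = s0 * (c * s0) + t0 * (e * s0)" by (simp add: algebra_simps)
    also have "\<dots> = s0 - (s0 * a1 + t0 * b1) * x" unfolding sc(1,2)[symmetric] by (simp add: algebra_simps)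
    also have "\<dots> = 1 * s0" using K by simp
    finally show ?thesis using dom_cancel_right[OF dom s00] by blast
  qed
  have inv: "invertible_mat (mk2 x y s0 t0)"
    by (rule invertible_mk2[where p'=a1 and q'=c and r'=b1 and s'=e]) (fact i1 i2 i3 i4 i7 i8 h1 K)+
  have "s0 * a + t0 * b = (s0 * a1 + t0 * b1) * d" using ab(1,2) by (simp add: algebra_simps)
  thus ?thesis using inv K by auto
qed


lemma inv2_eqs:
  fixes Q :: "'a::ring_1 mat"
  assumes "invertible_mat Q" "Q \<in> carrier_mat 2 2"
  shows "\<exists>p q r s. Q * mk2 p q r s = 1\<^sub>m 2 \<and> mk2 p q r s * Q = 1\<^sub>m 2"
proof -
  obtain Q' where Q': "Q' \<in> carrier_mat 2 2" "Q * Q' = 1\<^sub>m 2" "Q' * Q = 1\<^sub>m 2"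
    using invertible_inv[OF assms] by auto
  show ?thesis using Q' mat2_eq_mk2[OF Q'(1)] by metis
qed

lemma Crow:
  fixes u1 u2 w1 w2 :: "'a::ring_1"
  assumes dom: "is_domain TYPE('a)" and bez: "bezout_domain TYPE('a)"
    and uw: "u1 * w1 + u2 * w2 = 1"
  shows "\<exists>P. P \<in> carrier_mat 2 2 \<and> invertible_mat P \<and> P $$ (0,0) = u1 \<and> P $$ (0,1) = u2"
proof -
  obtain x s0 y t0 where Q: "invertible_mat (mk2 x s0 y t0)" "u1 * s0 + u2 * t0 = 0"
    using R1[OF dom bez] by blast
  obtain p q r s where pq: "mk2 x s0 y t0 * mk2 p q r s = 1\<^sub>m 2" "mk2 p q r s * mk2 x s0 y t0 = 1\<^sub>m 2"
    using inv2_eqs[OF Q(1)] by auto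
  have e: "x * p + s0 * r = 1" "x * q + s0 * s = 0" "y * p + t0 * r = 0" "y * q + t0 * s = 1"
    using mk2_eqD[OF pq(1)[unfolded mk2_mult one2]] by auto
  define \<delta> where "\<delta> = u1 * x + u2 * y"
  have u1: "u1 = \<delta> * p"
  proof -
    have "\<delta> * p = \<delta> * p + (u1 * s0 + u2 * t0) * r" using Q(2) by simp
    also have "\<dots> = u1 * (x * p + s0 * r) + u2 * (y * p + t0 * r)" unfolding \<delta>_def by (simp add: algebra_simps)
    finally show ?thesis using e by simp
  qed
  have u2: "u2 = \<delta> * q"
  proof -
    have "\<delta> * q = \<delta> * q + (u1 * s0 + u2 * t0) * s" using Q(2) by simp
    also have "\<dots> = u1 * (x * q + s0 * s) + u2 * (y * q + t0 * s)" unfolding \<delta>_def by (simp add: algebra_simps)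
    finally show ?thesis using e by simp
  qed
  define z where "z = p * w1 + q * w2"
  have dz: "\<delta> * z = 1" using uw unfolding u1 u2 z_def by (simp add: algebra_simps)
  have zd: "z * \<delta> = 1" using dom_unit[OF dom dz] .
  have D: "invertible_mat (mk2 \<delta> 0 0 1)"
    by (rule invertible_mk2[where p'=z and q'=0 and r'=0 and s'=1]) (simp_all add: dz zd)
  have Q': "invertible_mat (mk2 p q r s)"
    by (rule invertibleI[OF _ _ pq(2) pq(1)]) auto
  have "invertible_mat (mk2 \<delta> 0 0 1 * mk2 p q r s)"
    by (rule invertible_mult[OF D Q']) auto
  moreover have "mk2 \<delta> 0 0 1 * mk2 p q r s = mk2 u1 u2 r s" unfolding mk2_mult u1 u2 by simp
  ultimately show ?thesis by (intro exI[of _ "mk2 u1 u2 r s"]) auto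
qed

lemma Ccol:
  fixes z1 z2 x1 x2 :: "'a::ring_1"
  assumes dom: "is_domain TYPE('a)" and bez: "bezout_domain TYPE('a)"
    and zx: "z1 * x1 + z2 * x2 = 1"
  shows "\<exists>Q. Q \<in> carrier_mat 2 2 \<and> invertible_mat Q \<and> Q $$ (0,0) = x1 \<and> Q $$ (1,0) = x2"
proof -
  obtain \<alpha> \<beta> s0 t0 where P: "invertible_mat (mk2 \<alpha> \<beta> s0 t0)" "s0 * x1 + t0 * x2 = 0"
    using R2[OF dom bez] by blast
  obtain p q r s where pq: "mk2 \<alpha> \<beta> s0 t0 * mk2 p q r s = 1\<^sub>m 2" "mk2 p q r s * mk2 \<alpha> \<beta> s0 t0 = 1\<^sub>m 2"
    using inv2_eqs[OF P(1)] by auto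
  have e: "p * \<alpha> + q * s0 = 1" "p * \<beta> + q * t0 = 0" "r * \<alpha> + s * s0 = 0" "r * \<beta> + s * t0 = 1"
    using mk2_eqD[OF pq(2)[unfolded mk2_mult one2]] by auto
  define \<delta> where "\<delta> = \<alpha> * x1 + \<beta> * x2"
  have x1: "x1 = p * \<delta>"
  proof -
    have "p * \<delta> = p * \<delta> + q * (s0 * x1 + t0 * x2)" using P(2) by simp
    also have "\<dots> = (p * \<alpha> + q * s0) * x1 + (p * \<beta> + q * t0) * x2" unfolding \<delta>_def by (simp add: algebra_simps)
    finally show ?thesis using e by simp
  qed
  have x2: "x2 = r * \<delta>"
  proof -
    have "r * \<delta> = r * \<delta> + s * (s0 * x1 + t0 * x2)" using P(2) by simp
    also have "\<dots> = (r * \<alpha> + s * s0) * x1 + (r * \<beta> + s * t0) * x2" unfolding \<delta>_def by (simp add: algebra_simps)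
    finally show ?thesis using e by simp
  qed
  define z where "z = z1 * p + z2 * r"
  have zd: "z * \<delta> = 1" using zx unfolding x1 x2 z_def by (simp add: algebra_simps)
  have dz: "\<delta> * z = 1" using dom_unit[OF dom zd] .
  have D: "invertible_mat (mk2 \<delta> 0 0 1)"
    by (rule invertible_mk2[where p'=z and q'=0 and r'=0 and s'=1]) (simp_all add: dz zd)
  have P': "invertible_mat (mk2 p q r s)"
    by (rule invertibleI[OF _ _ pq(2) pq(1)]) auto
  have "invertible_mat (mk2 p q r s * mk2 \<delta> 0 0 1)"
    by (rule invertible_mult[OF P' D]) auto
  moreover have "mk2 p q r s * mk2 \<delta> 0 0 1 = mk2 x1 q x2 s" unfolding mk2_mult x1 x2 by simp
  ultimately show ?thesis by (intro exI[of _ "mk2 x1 q x2 s"]) auto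
qed

lemma Ore:
  fixes x b :: "'a::ring_1"
  assumes dom: "is_domain TYPE('a)" and bez: "bezout_domain TYPE('a)"
    and "x \<noteq> 0" "b \<noteq> 0"
  shows "\<exists>s t. s \<noteq> 0 \<and> x * s = b * t"
proof -
  obtain q0 s0 q1 t0 where Q: "invertible_mat (mk2 q0 s0 q1 t0)" "x * s0 + b * t0 = 0"
    using R1[OF dom bez] by blast
  obtain p q r s where pq: "mk2 q0 s0 q1 t0 * mk2 p q r s = 1\<^sub>m 2" "mk2 p q r s * mk2 q0 s0 q1 t0 = 1\<^sub>m 2"
    using inv2_eqs[OF Q(1)] by auto
  have e: "r * s0 + s * t0 = 1"
    using mk2_eqD[OF pq(2)[unfolded mk2_mult one2]] by auto
  have s0: "s0 \<noteq> 0"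
  proof
    assume "s0 = 0"
    hence "b * t0 = 0" using Q(2) by simp
    hence "t0 = 0" using assms(4) dom unfolding is_domain_def by blast
    thus False using e \<open>s0 = 0\<close> dom_nontriv[OF dom] by simp
  qed
  have "x * s0 = b * (- t0)" using Q(2) by (simp add: eq_neg_iff_add_eq_0)
  thus ?thesis using s0 by blast
qed

definition two_simple :: "'a::ring_1 itself \<Rightarrow> bool" where
  "two_simple TYPE('a) \<longleftrightarrow> (\<forall>a::'a. a \<noteq> 0 \<longrightarrow> (\<exists>u1 u2 v1 v2. u1 * a * v1 + u2 * a * v2 = 1))"

lemma LemmaG:
  fixes d w b :: "'a::ring_1"
  assumes dom: "is_domain TYPE('a)" and bez: "bezout_domain TYPE('a)"
    and ts: "two_simple TYPE('a)" and d0: "d \<noteq> 0" and b0: "b \<noteq> 0"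
  shows "\<exists>X Y. X \<in> carrier_mat 2 2 \<and> Y \<in> carrier_mat 2 2 \<and> invertible_mat X \<and> invertible_mat Y \<and>
     (X $$ (0,0) * d + X $$ (0,1) * w) * Y $$ (0,0) + (X $$ (0,1) * b) * Y $$ (1,0) = 1"
proof -
  obtain \<rho> \<sigma> where rs: "\<rho> \<noteq> 0" "w * \<rho> = b * \<sigma>"
  proof (cases "w = 0")
    case True thus ?thesis using that[of 1 0] by simp
  next
    case False thus ?thesis using Ore[OF dom bez False b0] that by blast
  qed
  have "d * \<rho> \<noteq> 0" using dom_mult_nz[OF dom d0 rs(1)] .
  then obtain t \<beta> where tb: "t \<noteq> 0" "d * \<rho> * t = b * \<beta>" using Ore[OF dom bez _ b0] by blast
  define m where "m = d * \<rho> * t"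
  have m0: "m \<noteq> 0" unfolding m_def using dom_mult_nz[OF dom \<open>d * \<rho> \<noteq> 0\<close> tb(1)] .
  obtain u1 u2 v1 v2 where uv: "u1 * m * v1 + u2 * m * v2 = 1" using ts m0 unfolding two_simple_def by blast
  obtain X where X: "X \<in> carrier_mat 2 2" "invertible_mat X" "X $$ (0,0) = u1" "X $$ (0,1) = u2"
    using Crow[OF dom bez, of u1 "m * v1" u2 "m * v2"] uv by (auto simp: mult.assoc)
  define x1 where "x1 = \<rho> * t * v1"
  define x2 where "x2 = - (\<sigma> * t * v1) + \<beta> * v2"
  have key: "(u1 * d + u2 * w) * x1 + (u2 * b) * x2 = 1"
  proof -
    have "(u1 * d + u2 * w) * x1 + (u2 * b) * x2 =
       u1 * (d * \<rho> * t) * v1 + u2 * ((w * \<rho>) * t * v1) - u2 * ((b * \<sigma>) * t * v1) + u2 * (b * \<beta>) * v2"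
      unfolding x1_def x2_def by (simp add: algebra_simps)
    also have "\<dots> = u1 * m * v1 + u2 * m * v2" unfolding rs(2) tb(2)[symmetric] m_def by simp
    finally show ?thesis using uv by simp
  qed
  obtain Y where Y: "Y \<in> carrier_mat 2 2" "invertible_mat Y" "Y $$ (0,0) = x1" "Y $$ (1,0) = x2"
    using Ccol[OF dom bez key] by blast
  show ?thesis using X Y key by (intro exI[of _ X] exI[of _ Y]) (simp add: mult.assoc)
qed


section \<open>Embedding 2x2 matrices\<close>

lemma sum_one:
  assumes "finite S" "i \<in> S" "\<And>k. k \<in> S \<Longrightarrow> k \<noteq> i \<Longrightarrow> f k = 0"
  shows "sum f S = f i"
proof -
  have "sum f S = f i + sum f (S - {i})" using assms by (simp add: sum.remove)
  also have "sum f (S - {i}) = 0" using assms by (intro sum.neutral) auto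
  finally show ?thesis by simp
qed

lemma sum_two:
  assumes "finite S" "i \<in> S" "j \<in> S" "i \<noteq> j" "\<And>k. k \<in> S \<Longrightarrow> k \<noteq> i \<Longrightarrow> k \<noteq> j \<Longrightarrow> f k = 0"
  shows "sum f S = f i + f j"
proof -
  have "sum f S = f i + sum f (S - {i})" using assms by (simp add: sum.remove)
  also have "sum f (S - {i}) = f j" using assms by (intro sum_one) auto
  finally show ?thesis .
qed

lemma mult_index:
  fixes A B :: "'a::semiring_0 mat"
  assumes "A \<in> carrier_mat m n" "B \<in> carrier_mat n p" "i < m" "j < p"
  shows "(A * B) $$ (i,j) = (\<Sum>k\<in>{0..<n}. A $$ (i,k) * B $$ (k,j))"
  using assms by (auto simp: scalar_prod_def intro!: sum.cong)

definition emb :: "nat \<Rightarrow> nat \<Rightarrow> nat \<Rightarrow> 'a::ring_1 mat \<Rightarrow> 'a mat" where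
  "emb n i j X = mat n n (\<lambda>(r,c). if r = i then (if c = i then X $$ (0,0) else if c = j then X $$ (0,1) else 0)
     else if r = j then (if c = i then X $$ (1,0) else if c = j then X $$ (1,1) else 0)
     else (if r = c then 1 else 0))"

lemma emb_carrier[simp]: "emb n i j X \<in> carrier_mat n n"
  by (simp add: emb_def)

lemma emb_dims[simp]: "dim_row (emb n i j X) = n" "dim_col (emb n i j X) = n"
  by (simp_all add: emb_def)

lemma emb_index:
  "r < n \<Longrightarrow> c < n \<Longrightarrow> emb n i j X $$ (r,c) = (if r = i then (if c = i then X $$ (0,0) else if c = j then X $$ (0,1) else 0)
     else if r = j then (if c = i then X $$ (1,0) else if c = j then X $$ (1,1) else 0)
     else (if r = c then 1 else 0))"
  by (simp add: emb_def)

lemma L_left: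
  fixes X A :: "'a::ring_1 mat"
  assumes "i \<noteq> j" "i < n" "j < n" "A \<in> carrier_mat n m" "r < n" "c < m"
  shows "(emb n i j X * A) $$ (r,c) = (if r = i then X $$ (0,0) * A $$ (i,c) + X $$ (0,1) * A $$ (j,c)
     else if r = j then X $$ (1,0) * A $$ (i,c) + X $$ (1,1) * A $$ (j,c) else A $$ (r,c))"
proof -
  have e: "(emb n i j X * A) $$ (r,c) = (\<Sum>k\<in>{0..<n}. emb n i j X $$ (r,k) * A $$ (k,c))"
    by (rule mult_index[OF emb_carrier assms(4,5,6)])
  show ?thesis
  proof (cases "r = i")
    case True
    show ?thesis unfolding e using assms True
      by (subst sum_two[of _ i j]) (auto simp: emb_index)
  next
    case ri: False
    show ?thesis
    proof (cases "r = j")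
      case True
      show ?thesis unfolding e using assms True ri
        by (subst sum_two[of _ i j]) (auto simp: emb_index)
    next
      case False
      show ?thesis unfolding e using assms False ri
        by (subst sum_one[of _ r]) (auto simp: emb_index)
    qed
  qed
qed

lemma L_right:
  fixes X A :: "'a::ring_1 mat"
  assumes "i \<noteq> j" "i < n" "j < n" "A \<in> carrier_mat m n" "r < m" "c < n"
  shows "(A * emb n i j X) $$ (r,c) = (if c = i then A $$ (r,i) * X $$ (0,0) + A $$ (r,j) * X $$ (1,0)
     else if c = j then A $$ (r,i) * X $$ (0,1) + A $$ (r,j) * X $$ (1,1) else A $$ (r,c))"
proof -
  have e: "(A * emb n i j X) $$ (r,c) = (\<Sum>k\<in>{0..<n}. A $$ (r,k) * emb n i j X $$ (k,c))"
    by (rule mult_index[OF assms(4) emb_carrier assms(5,6)])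
  show ?thesis
  proof (cases "c = i")
    case True
    show ?thesis unfolding e using assms True
      by (subst sum_two[of _ i j]) (auto simp: emb_index)
  next
    case ci: False
    show ?thesis
    proof (cases "c = j")
      case True
      show ?thesis unfolding e using assms True ci
        by (subst sum_two[of _ i j]) (auto simp: emb_index)
    next
      case False
      show ?thesis unfolding e using assms False ci
        by (subst sum_one[of _ c]) (auto simp: emb_index)
    qed
  qed
qed

lemma emb_mult:
  fixes X Y :: "'a::ring_1 mat"
  assumes "i \<noteq> j" "i < n" "j < n" "X \<in> carrier_mat 2 2" "Y \<in> carrier_mat 2 2"
  shows "emb n i j X * emb n i j Y = emb n i j (X * Y)"
proof (rule eq_matI)
  fix r c assume rc: "r < dim_row (emb n i j (X * Y))" "c < dim_col (emb n i j (X * Y))"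
  hence rc': "r < n" "c < n" by auto
  show "(emb n i j X * emb n i j Y) $$ (r,c) = emb n i j (X * Y) $$ (r,c)"
    unfolding L_left[OF assms(1-3) emb_carrier rc'] using rc' assms
    by (auto simp: emb_index scalar_prod_def numeral_2_eq_2)
qed auto

lemma emb_one: "i \<noteq> j \<Longrightarrow> emb n i j (1\<^sub>m 2) = (1\<^sub>m n :: 'a::ring_1 mat)"
  by (rule eq_matI) (auto simp: emb_index)

lemma emb_invertible:
  fixes X :: "'a::ring_1 mat"
  assumes "i \<noteq> j" "i < n" "j < n" "X \<in> carrier_mat 2 2" "invertible_mat X"
  shows "invertible_mat (emb n i j X)"
proof -
  obtain X' where X': "X' \<in> carrier_mat 2 2" "X * X' = 1\<^sub>m 2" "X' * X = 1\<^sub>m 2"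
    using invertible_inv[OF assms(5,4)] by auto
  show ?thesis
    by (rule invertibleI[of _ n "emb n i j X'"])
       (auto simp: emb_mult[OF assms(1-3)] assms X' emb_one[OF assms(1)])
qed


section \<open>Equivalence\<close>

definition eqv :: "nat \<Rightarrow> nat \<Rightarrow> 'a::ring_1 mat \<Rightarrow> 'a mat \<Rightarrow> bool" where
  "eqv m n A B \<longleftrightarrow> A \<in> carrier_mat m n \<and> B \<in> carrier_mat m n \<and>
     (\<exists>P Q. P \<in> carrier_mat m m \<and> Q \<in> carrier_mat n n \<and> invertible_mat P \<and> invertible_mat Q \<and> B = P * A * Q)"

lemma assoc4:
  fixes P2 P A Q Q2 :: "'a::ring_1 mat"
  assumes "P2 \<in> carrier_mat m m" "P \<in> carrier_mat m m" "A \<in> carrier_mat m n" "Q \<in> carrier_mat n n" "Q2 \<in> carrier_mat n n"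
  shows "P2 * (P * A * Q) * Q2 = (P2 * P) * A * (Q * Q2)"
proof -
  have c1: "P * A \<in> carrier_mat m n" using assms by auto
  have c2: "P2 * (P * A) \<in> carrier_mat m n" using assms by auto
  have "P2 * (P * A * Q) = (P2 * (P * A)) * Q" using assoc_mult_mat[OF assms(1) c1 assms(4)] by simp
  hence "P2 * (P * A * Q) * Q2 = (P2 * (P * A)) * (Q * Q2)" using assoc_mult_mat[OF c2 assms(4,5)] by simp
  moreover have "P2 * (P * A) = (P2 * P) * A" using assoc_mult_mat[OF assms(1,2,3)] by simp
  ultimately show ?thesis by simp
qed

lemma eqv_refl: "A \<in> carrier_mat m n \<Longrightarrow> eqv m n A (A :: 'a::ring_1 mat)"
  unfolding eqv_def by (intro conjI exI[of _ "1\<^sub>m m"] exI[of _ "1\<^sub>m n"]) (auto simp: invertible_one)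

lemma eqv_trans:
  assumes "eqv m n A B" "eqv m n B (C :: 'a::ring_1 mat)"
  shows "eqv m n A C"
proof -
  obtain P Q where PQ: "P \<in> carrier_mat m m" "Q \<in> carrier_mat n n" "invertible_mat P" "invertible_mat Q" "B = P * A * Q"
    using assms(1) unfolding eqv_def by blast
  obtain P2 Q2 where PQ2: "P2 \<in> carrier_mat m m" "Q2 \<in> carrier_mat n n" "invertible_mat P2" "invertible_mat Q2" "C = P2 * B * Q2"
    using assms(2) unfolding eqv_def by blast
  have Ac: "A \<in> carrier_mat m n" and Cc: "C \<in> carrier_mat m n" using assms unfolding eqv_def by auto
  have "C = (P2 * P) * A * (Q * Q2)" unfolding PQ2(5) PQ(5)
    by (rule assoc4[OF PQ2(1) PQ(1) Ac PQ(2) PQ2(2)])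
  moreover have "invertible_mat (P2 * P)" by (rule invertible_mult[OF PQ2(3) PQ(3) PQ2(1) PQ(1)])
  moreover have "invertible_mat (Q * Q2)" by (rule invertible_mult[OF PQ(4) PQ2(4) PQ(2) PQ2(2)])
  moreover have "P2 * P \<in> carrier_mat m m" "Q * Q2 \<in> carrier_mat n n" using PQ PQ2 by auto
  ultimately show ?thesis unfolding eqv_def using Ac Cc by blast
qed

lemma eqv_left:
  assumes "A \<in> carrier_mat m n" "P \<in> carrier_mat m m" "invertible_mat (P :: 'a::ring_1 mat)"
  shows "eqv m n A (P * A)"
  unfolding eqv_def using assms
  by (intro conjI exI[of _ P] exI[of _ "1\<^sub>m n"]) (auto simp: invertible_one)

lemma eqv_right:
  assumes "A \<in> carrier_mat m n" "Q \<in> carrier_mat n n" "invertible_mat (Q :: 'a::ring_1 mat)"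
  shows "eqv m n A (A * Q)"
  unfolding eqv_def using assms
  by (intro conjI exI[of _ "1\<^sub>m m"] exI[of _ Q]) (auto simp: invertible_one)

lemma eqv_carrier: "eqv m n A B \<Longrightarrow> B \<in> carrier_mat m n"
  unfolding eqv_def by auto

section \<open>Reductions\<close>

lemma RowRed:
  fixes A :: "'a::ring_1 mat"
  assumes dom: "is_domain TYPE('a)" and bez: "bezout_domain TYPE('a)"
    and A: "A \<in> carrier_mat m n" and m0: "0 < m" and n0: "0 < n"
  shows "\<exists>Q. Q \<in> carrier_mat n n \<and> invertible_mat Q \<and> (\<forall>j. 0 < j \<and> j < n \<longrightarrow> (A * Q) $$ (0,j) = 0)"
proof -
  have "\<forall>t. t \<le> n \<longrightarrow> (\<exists>Q. Q \<in> carrier_mat n n \<and> invertible_mat Q \<and> (\<forall>j. 0 < j \<and> j < t \<longrightarrow> (A * Q) $$ (0,j) = 0))"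
  proof
    fix t show "t \<le> n \<longrightarrow> (\<exists>Q. Q \<in> carrier_mat n n \<and> invertible_mat Q \<and> (\<forall>j. 0 < j \<and> j < t \<longrightarrow> (A * Q) $$ (0,j) = 0))"
    proof (induction t)
      case 0 thus ?case by (intro impI exI[of _ "1\<^sub>m n"]) (auto simp: invertible_one)
    next
      case (Suc t)
      show ?case
      proof
        assume tn: "Suc t \<le> n"
        then obtain Q where Q: "Q \<in> carrier_mat n n" "invertible_mat Q" "\<forall>j. 0 < j \<and> j < t \<longrightarrow> (A * Q) $$ (0,j) = 0" using Suc by auto
        define B where "B = A * Q"
        have Bc: "B \<in> carrier_mat m n" using A Q unfolding B_def by auto
        show "\<exists>Q. Q \<in> carrier_mat n n \<and> invertible_mat Q \<and> (\<forall>j. 0 < j \<and> j < Suc t \<longrightarrow> (A * Q) $$ (0,j) = 0)"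
        proof (cases "t = 0")
          case True thus ?thesis using Q by (intro exI[of _ Q]) auto
        next
          case False
          obtain x s0 y t0 where X: "invertible_mat (mk2 x s0 y t0)" "B $$ (0,0) * s0 + B $$ (0,t) * t0 = 0"
            using R1[OF dom bez] by blast
          let ?E = "emb n 0 t (mk2 x s0 y t0)"
          have Ei: "invertible_mat ?E" using emb_invertible[OF _ _ _ _ X(1)] False tn by auto
          have QE: "invertible_mat (Q * ?E)" by (rule invertible_mult[OF Q(2) Ei Q(1) emb_carrier])
          have ass: "A * (Q * ?E) = B * ?E" unfolding B_def by (rule assoc_mult_mat[symmetric, OF A Q(1) emb_carrier])
          have "\<forall>j. 0 < j \<and> j < Suc t \<longrightarrow> (B * ?E) $$ (0,j) = 0"
          proof (intro allI impI)
            fix j assume j: "0 < j \<and> j < Suc t"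
            have jn: "j < n" using j tn by auto
            show "(B * ?E) $$ (0,j) = 0"
              by (subst L_right[OF _ _ _ Bc m0 jn]) (use j False tn Q(3) X(2) in \<open>auto simp: less_Suc_eq B_def\<close>)
          qed
          thus ?thesis using QE Q(1) unfolding ass[symmetric] by (intro exI[of _ "Q * ?E"]) auto
        qed
      qed
    qed
  qed
  thus ?thesis by auto
qed

lemma ColRed:
  fixes A :: "'a::ring_1 mat"
  assumes dom: "is_domain TYPE('a)" and bez: "bezout_domain TYPE('a)"
    and A: "A \<in> carrier_mat m n" and m0: "0 < m" and n0: "0 < n"
  shows "\<exists>P. P \<in> carrier_mat m m \<and> invertible_mat P \<and> (\<forall>i. 0 < i \<and> i < m \<longrightarrow> (P * A) $$ (i,0) = 0)"
proof -
  have "\<forall>t. t \<le> m \<longrightarrow> (\<exists>P. P \<in> carrier_mat m m \<and> invertible_mat P \<and> (\<forall>i. 0 < i \<and> i < t \<longrightarrow> (P * A) $$ (i,0) = 0))"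
  proof
    fix t show "t \<le> m \<longrightarrow> (\<exists>P. P \<in> carrier_mat m m \<and> invertible_mat P \<and> (\<forall>i. 0 < i \<and> i < t \<longrightarrow> (P * A) $$ (i,0) = 0))"
    proof (induction t)
      case 0 thus ?case by (intro impI exI[of _ "1\<^sub>m m"]) (auto simp: invertible_one)
    next
      case (Suc t)
      show ?case
      proof
        assume tm: "Suc t \<le> m"
        then obtain P where P: "P \<in> carrier_mat m m" "invertible_mat P" "\<forall>i. 0 < i \<and> i < t \<longrightarrow> (P * A) $$ (i,0) = 0" using Suc by auto
        define B where "B = P * A"
        have Bc: "B \<in> carrier_mat m n" using A P unfolding B_def by auto
        show "\<exists>P. P \<in> carrier_mat m m \<and> invertible_mat P \<and> (\<forall>i. 0 < i \<and> i < Suc t \<longrightarrow> (P * A) $$ (i,0) = 0)"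
        proof (cases "t = 0")
          case True thus ?thesis using P by (intro exI[of _ P]) auto
        next
          case False
          obtain x y s0 t0 where X: "invertible_mat (mk2 x y s0 t0)" "s0 * B $$ (0,0) + t0 * B $$ (t,0) = 0"
            using R2[OF dom bez] by blast
          let ?E = "emb m 0 t (mk2 x y s0 t0)"
          have Ei: "invertible_mat ?E" using emb_invertible[OF _ _ _ _ X(1)] False tm by auto
          have EP: "invertible_mat (?E * P)" by (rule invertible_mult[OF Ei P(2) emb_carrier P(1)])
          have ass: "(?E * P) * A = ?E * B" unfolding B_def by (rule assoc_mult_mat[OF emb_carrier P(1) A])
          have "\<forall>i. 0 < i \<and> i < Suc t \<longrightarrow> (?E * B) $$ (i,0) = 0"
          proof (intro allI impI)
            fix i assume i: "0 < i \<and> i < Suc t"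
            have im: "i < m" using i tm by auto
            show "(?E * B) $$ (i,0) = 0"
              by (subst L_left[OF _ _ _ Bc im n0]) (use i False tm P(3) X(2) in \<open>auto simp: less_Suc_eq B_def\<close>)
          qed
          thus ?thesis using EP P(1) unfolding ass[symmetric] by (intro exI[of _ "?E * P"]) auto
        qed
      qed
    qed
  qed
  thus ?thesis by auto
qed

lemma ClearCol:
  fixes A :: "'a::ring_1 mat"
  assumes A: "A \<in> carrier_mat m n" and m0: "0 < m" and n0: "0 < n" and a1: "A $$ (0,0) = 1"
  shows "\<exists>B. eqv m n A B \<and> (\<forall>j<n. B $$ (0,j) = A $$ (0,j)) \<and> (\<forall>i. 0 < i \<and> i < m \<longrightarrow> B $$ (i,0) = 0)"
proof -
  have "\<forall>t. t \<le> m \<longrightarrow> (\<exists>B. eqv m n A B \<and> (\<forall>j<n. B $$ (0,j) = A $$ (0,j)) \<and> (\<forall>i. 0 < i \<and> i < t \<longrightarrow> B $$ (i,0) = 0))"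
  proof
    fix t show "t \<le> m \<longrightarrow> (\<exists>B. eqv m n A B \<and> (\<forall>j<n. B $$ (0,j) = A $$ (0,j)) \<and> (\<forall>i. 0 < i \<and> i < t \<longrightarrow> B $$ (i,0) = 0))"
    proof (induction t)
      case 0 thus ?case using eqv_refl[OF A] by auto
    next
      case (Suc t)
      show ?case
      proof
        assume tm: "Suc t \<le> m"
        then obtain B where B: "eqv m n A B" "\<forall>j<n. B $$ (0,j) = A $$ (0,j)" "\<forall>i. 0 < i \<and> i < t \<longrightarrow> B $$ (i,0) = 0" using Suc by auto
        have Bc: "B \<in> carrier_mat m n" using eqv_carrier[OF B(1)] .
        show "\<exists>B. eqv m n A B \<and> (\<forall>j<n. B $$ (0,j) = A $$ (0,j)) \<and> (\<forall>i. 0 < i \<and> i < Suc t \<longrightarrow> B $$ (i,0) = 0)"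
        proof (cases "t = 0")
          case True thus ?thesis using B by (intro exI[of _ B]) auto
        next
          case False
          have X: "invertible_mat (mk2 1 0 (- B $$ (t,0)) 1)"
            by (rule invertible_mk2[where p'=1 and q'=0 and r'="B $$ (t,0)" and s'=1]) auto
          let ?E = "emb m 0 t (mk2 1 0 (- B $$ (t,0)) 1)"
          have Ei: "invertible_mat ?E" using emb_invertible[OF _ _ _ _ X] False tm by auto
          have e: "eqv m n A (?E * B)" using eqv_trans[OF B(1) eqv_left[OF Bc emb_carrier Ei]] .
          have b00: "B $$ (0,0) = 1" using B(2) n0 a1 by auto
          have "\<forall>i. 0 < i \<and> i < Suc t \<longrightarrow> (?E * B) $$ (i,0) = 0"
          proof (intro allI impI)
            fix i assume i: "0 < i \<and> i < Suc t"
            have im: "i < m" using i tm by auto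
            show "(?E * B) $$ (i,0) = 0"
              by (subst L_left[OF _ _ _ Bc im n0]) (use i False tm B(3) b00 in \<open>auto simp: less_Suc_eq\<close>)
          qed
          moreover have "\<forall>j<n. (?E * B) $$ (0,j) = A $$ (0,j)"
          proof (intro allI impI)
            fix j assume j: "j < n"
            show "(?E * B) $$ (0,j) = A $$ (0,j)"
              by (subst L_left[OF _ _ _ Bc m0 j]) (use j False tm B(2) in auto)
          qed
          ultimately show ?thesis using e by blast
        qed
      qed
    qed
  qed
  thus ?thesis using m0 by auto
qed

lemma ClearRow:
  fixes A :: "'a::ring_1 mat"
  assumes A: "A \<in> carrier_mat m n" and m0: "0 < m" and n0: "0 < n" and a1: "A $$ (0,0) = 1"
  shows "\<exists>B. eqv m n A B \<and> (\<forall>i<m. B $$ (i,0) = A $$ (i,0)) \<and> (\<forall>j. 0 < j \<and> j < n \<longrightarrow> B $$ (0,j) = 0)"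
proof -
  have "\<forall>t. t \<le> n \<longrightarrow> (\<exists>B. eqv m n A B \<and> (\<forall>i<m. B $$ (i,0) = A $$ (i,0)) \<and> (\<forall>j. 0 < j \<and> j < t \<longrightarrow> B $$ (0,j) = 0))"
  proof
    fix t show "t \<le> n \<longrightarrow> (\<exists>B. eqv m n A B \<and> (\<forall>i<m. B $$ (i,0) = A $$ (i,0)) \<and> (\<forall>j. 0 < j \<and> j < t \<longrightarrow> B $$ (0,j) = 0))"
    proof (induction t)
      case 0 thus ?case using eqv_refl[OF A] by auto
    next
      case (Suc t)
      show ?case
      proof
        assume tn: "Suc t \<le> n"
        then obtain B where B: "eqv m n A B" "\<forall>i<m. B $$ (i,0) = A $$ (i,0)" "\<forall>j. 0 < j \<and> j < t \<longrightarrow> B $$ (0,j) = 0" using Suc by auto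
        have Bc: "B \<in> carrier_mat m n" using eqv_carrier[OF B(1)] .
        show "\<exists>B. eqv m n A B \<and> (\<forall>i<m. B $$ (i,0) = A $$ (i,0)) \<and> (\<forall>j. 0 < j \<and> j < Suc t \<longrightarrow> B $$ (0,j) = 0)"
        proof (cases "t = 0")
          case True thus ?thesis using B by (intro exI[of _ B]) auto
        next
          case False
          have X: "invertible_mat (mk2 1 (- B $$ (0,t)) 0 1)"
            by (rule invertible_mk2[where p'=1 and q'="B $$ (0,t)" and r'=0 and s'=1]) auto
          let ?E = "emb n 0 t (mk2 1 (- B $$ (0,t)) 0 1)"
          have Ei: "invertible_mat ?E" using emb_invertible[OF _ _ _ _ X] False tn by auto
          have e: "eqv m n A (B * ?E)" using eqv_trans[OF B(1) eqv_right[OF Bc emb_carrier Ei]] .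
          have b00: "B $$ (0,0) = 1" using B(2) m0 a1 by auto
          have "\<forall>j. 0 < j \<and> j < Suc t \<longrightarrow> (B * ?E) $$ (0,j) = 0"
          proof (intro allI impI)
            fix j assume j: "0 < j \<and> j < Suc t"
            have jn: "j < n" using j tn by auto
            show "(B * ?E) $$ (0,j) = 0"
              by (subst L_right[OF _ _ _ Bc m0 jn]) (use j False tn B(3) b00 in \<open>auto simp: less_Suc_eq\<close>)
          qed
          moreover have "\<forall>i<m. (B * ?E) $$ (i,0) = A $$ (i,0)"
          proof (intro allI impI)
            fix i assume i: "i < m"
            show "(B * ?E) $$ (i,0) = A $$ (i,0)"
              by (subst L_right[OF _ _ _ Bc i n0]) (use i False tn B(2) in auto)
          qed
          ultimately show ?thesis using e by blast
        qed
      qed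
    qed
  qed
  thus ?thesis using n0 by auto
qed

lemma Clear:
  fixes A :: "'a::ring_1 mat"
  assumes A: "A \<in> carrier_mat m n" and m0: "0 < m" and n0: "0 < n" and a1: "A $$ (0,0) = 1"
  shows "\<exists>B. eqv m n A B \<and> B $$ (0,0) = 1 \<and> (\<forall>i. 0 < i \<and> i < m \<longrightarrow> B $$ (i,0) = 0)
     \<and> (\<forall>j. 0 < j \<and> j < n \<longrightarrow> B $$ (0,j) = 0)"
proof -
  obtain B where B: "eqv m n A B" "\<forall>j<n. B $$ (0,j) = A $$ (0,j)" "\<forall>i. 0 < i \<and> i < m \<longrightarrow> B $$ (i,0) = 0"
    using ClearCol[OF A m0 n0 a1] by blast
  have Bc: "B \<in> carrier_mat m n" using eqv_carrier[OF B(1)] .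
  have b1: "B $$ (0,0) = 1" using B(2) n0 a1 by auto
  obtain C where C: "eqv m n B C" "\<forall>i<m. C $$ (i,0) = B $$ (i,0)" "\<forall>j. 0 < j \<and> j < n \<longrightarrow> C $$ (0,j) = 0"
    using ClearRow[OF Bc m0 n0 b1] by blast
  show ?thesis using eqv_trans[OF B(1) C(1)] C B(3) b1 m0 by (intro exI[of _ C]) auto
qed


lemma sum_zero_terms: "(\<And>k. k \<in> S \<Longrightarrow> f k = 0) \<Longrightarrow> sum f S = 0"
  by (rule sum.neutral) auto

lemma MainRed:
  fixes A :: "'a::ring_1 mat"
  assumes dom: "is_domain TYPE('a)" and bez: "bezout_domain TYPE('a)" and ts: "two_simple TYPE('a)"
    and A: "A \<in> carrier_mat m n" and m0: "0 < m" and n0: "0 < n"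
  shows "\<exists>B. eqv m n A B \<and> (\<forall>i. 0 < i \<and> i < m \<longrightarrow> B $$ (i,0) = 0) \<and> (\<forall>j. 0 < j \<and> j < n \<longrightarrow> B $$ (0,j) = 0)
     \<and> (B $$ (0,0) = 1 \<or> (\<forall>i j. i < m \<and> j < n \<and> (0 < i \<or> 0 < j) \<longrightarrow> B $$ (i,j) = 0))"
proof (cases "\<forall>i j. i < m \<and> j < n \<longrightarrow> A $$ (i,j) = 0")
  case True
  thus ?thesis using eqv_refl[OF A] m0 n0 by (intro exI[of _ A]) auto
next
  case False
  then obtain i0 j0 where ij0: "i0 < m" "j0 < n" "A $$ (i0,j0) \<noteq> 0" by blast
  obtain A1 where A1: "eqv m n A A1" "A1 $$ (0,j0) \<noteq> 0"
  proof (cases "i0 = 0")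
    case True thus ?thesis using that[of A] eqv_refl[OF A] ij0 by auto
  next
    case False
    have X: "invertible_mat (mk2 0 1 1 (0::'a))"
      by (rule invertible_mk2[where p'=0 and q'=1 and r'=1 and s'=0]) auto
    let ?E = "emb m 0 i0 (mk2 0 1 1 (0::'a))"
    have Ei: "invertible_mat ?E" using emb_invertible[OF _ _ _ _ X] False ij0 m0 by auto
    have "(?E * A) $$ (0,j0) = A $$ (i0,j0)"
      by (subst L_left[OF _ _ _ A m0 ij0(2)]) (use False ij0 m0 in auto)
    thus ?thesis using that[of "?E * A"] eqv_left[OF A emb_carrier Ei] ij0 by auto
  qed
  have A1c: "A1 \<in> carrier_mat m n" using eqv_carrier[OF A1(1)] .
  obtain Q where Q: "Q \<in> carrier_mat n n" "invertible_mat Q" "\<forall>j. 0 < j \<and> j < n \<longrightarrow> (A1 * Q) $$ (0,j) = 0"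
    using RowRed[OF dom bez A1c m0 n0] by blast
  define A2 where "A2 = A1 * Q"
  have A2c: "A2 \<in> carrier_mat m n" using A1c Q unfolding A2_def by auto
  have eA2: "eqv m n A A2" unfolding A2_def using eqv_trans[OF A1(1) eqv_right[OF A1c Q(1,2)]] .
  have r0: "\<forall>j. 0 < j \<and> j < n \<longrightarrow> A2 $$ (0,j) = 0" using Q(3) unfolding A2_def by auto
  have d0: "A2 $$ (0,0) \<noteq> 0"
  proof
    assume d: "A2 $$ (0,0) = 0"
    obtain Q' where Q': "Q' \<in> carrier_mat n n" "Q * Q' = 1\<^sub>m n" "Q' * Q = 1\<^sub>m n"
      using invertible_inv[OF Q(2,1)] by auto
    have "A2 * Q' = A1 * (Q * Q')" unfolding A2_def by (rule assoc_mult_mat[OF A1c Q(1) Q'(1)])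
    hence e: "A2 * Q' = A1" using Q'(2) A1c by simp
    have "(A2 * Q') $$ (0,j0) = (\<Sum>k\<in>{0..<n}. A2 $$ (0,k) * Q' $$ (k,j0))"
      by (rule mult_index[OF A2c Q'(1) m0 ij0(2)])
    also have "\<dots> = 0"
    proof (rule sum_zero_terms)
      fix k assume "k \<in> {0..<n}"
      thus "A2 $$ (0,k) * Q' $$ (k,j0) = 0" using d r0 by (cases "k = 0") auto
    qed
    finally show False using e A1(2) by simp
  qed
  show ?thesis
  proof (cases "\<exists>i j. 0 < i \<and> i < m \<and> 0 < j \<and> j < n \<and> A2 $$ (i,j) \<noteq> 0")
    case True
    then obtain i j where ij: "0 < i" "i < m" "0 < j" "j < n" "A2 $$ (i,j) \<noteq> 0" by blast
    obtain X Y where XY: "X \<in> carrier_mat 2 2" "Y \<in> carrier_mat 2 2" "invertible_mat X" "invertible_mat Y"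
       "(X $$ (0,0) * A2 $$ (0,0) + X $$ (0,1) * A2 $$ (i,0)) * Y $$ (0,0) + (X $$ (0,1) * A2 $$ (i,j)) * Y $$ (1,0) = 1"
      using LemmaG[OF dom bez ts d0 ij(5)] by blast
    let ?EX = "emb m 0 i X" and ?EY = "emb n 0 j Y"
    have EXi: "invertible_mat ?EX" using emb_invertible[OF _ _ _ XY(1,3)] ij by auto
    have EYi: "invertible_mat ?EY" using emb_invertible[OF _ _ _ XY(2,4)] ij by auto
    have XA: "?EX * A2 \<in> carrier_mat m n" using A2c by auto
    define A3 where "A3 = ?EX * A2 * ?EY"
    have A3c: "A3 \<in> carrier_mat m n" using A2c unfolding A3_def by auto
    have eA3: "eqv m n A A3" unfolding A3_def
      using eqv_trans[OF eA2 eqv_trans[OF eqv_left[OF A2c emb_carrier EXi] eqv_right[OF XA emb_carrier EYi]]] .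
    have "A3 $$ (0,0) = (?EX * A2) $$ (0,0) * Y $$ (0,0) + (?EX * A2) $$ (0,j) * Y $$ (1,0)"
      unfolding A3_def by (subst L_right[OF _ _ _ XA m0 n0]) (use ij in auto)
    also have "(?EX * A2) $$ (0,0) = X $$ (0,0) * A2 $$ (0,0) + X $$ (0,1) * A2 $$ (i,0)"
      by (subst L_left[OF _ _ _ A2c m0 n0]) (use ij in auto)
    also have "(?EX * A2) $$ (0,j) = X $$ (0,1) * A2 $$ (i,j)"
      by (subst L_left[OF _ _ _ A2c m0 ij(4)]) (use ij r0 in auto)
    finally have a31: "A3 $$ (0,0) = 1" using XY(5) by simp
    obtain B where B: "eqv m n A3 B" "B $$ (0,0) = 1" "\<forall>i. 0 < i \<and> i < m \<longrightarrow> B $$ (i,0) = 0"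
       "\<forall>j. 0 < j \<and> j < n \<longrightarrow> B $$ (0,j) = 0"
      using Clear[OF A3c m0 n0 a31] by blast
    show ?thesis using eqv_trans[OF eA3 B(1)] B(2-4) by blast
  next
    case False
    obtain P where P: "P \<in> carrier_mat m m" "invertible_mat P" "\<forall>i. 0 < i \<and> i < m \<longrightarrow> (P * A2) $$ (i,0) = 0"
      using ColRed[OF dom bez A2c m0 n0] by blast
    have eB: "eqv m n A (P * A2)" using eqv_trans[OF eA2 eqv_left[OF A2c P(1,2)]] .
    have z: "(P * A2) $$ (i,j) = 0" if "i < m" "0 < j" "j < n" for i j
    proof -
      have "(P * A2) $$ (i,j) = (\<Sum>k\<in>{0..<m}. P $$ (i,k) * A2 $$ (k,j))"
        by (rule mult_index[OF P(1) A2c that(1,3)])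
      also have "\<dots> = 0"
      proof (rule sum_zero_terms)
        fix k assume "k \<in> {0..<m}"
        hence "A2 $$ (k,j) = 0" using False r0 that by (cases "k = 0") (simp, force)
        thus "P $$ (i,k) * A2 $$ (k,j) = 0" by simp
      qed
      finally show ?thesis .
    qed
    have z2: "\<forall>i j. i < m \<and> j < n \<and> (0 < i \<or> 0 < j) \<longrightarrow> (P * A2) $$ (i,j) = 0"
    proof (intro allI impI)
      fix i j assume h: "i < m \<and> j < n \<and> (0 < i \<or> 0 < j)"
      show "(P * A2) $$ (i,j) = 0" by (cases "j = 0") (use h P(3) z in auto)
    qed
    show ?thesis using eB P(3) z m0 z2 by (intro exI[of _ "P * A2"]) auto
  qed
qed


section \<open>Blocks and diagonal form\<close>

definition bl :: "'a::ring_1 mat \<Rightarrow> 'a mat" where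
  "bl X = mat (Suc (dim_row X)) (Suc (dim_col X))
     (\<lambda>(r,c). if r = 0 \<and> c = 0 then 1 else if r = 0 \<or> c = 0 then 0 else X $$ (r - 1, c - 1))"

lemma bl_carrier: "X \<in> carrier_mat a b \<Longrightarrow> bl X \<in> carrier_mat (Suc a) (Suc b)"
  by (auto simp: bl_def)

lemma bl_index:
  "r < Suc (dim_row X) \<Longrightarrow> c < Suc (dim_col X) \<Longrightarrow>
   bl X $$ (r,c) = (if r = 0 \<and> c = 0 then 1 else if r = 0 \<or> c = 0 then 0 else X $$ (r - 1, c - 1))"
  by (simp add: bl_def)

lemma bl_mult:
  fixes X Y :: "'a::ring_1 mat"
  assumes X: "X \<in> carrier_mat a b" and Y: "Y \<in> carrier_mat b c"
  shows "bl X * bl Y = bl (X * Y)"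
proof (rule eq_matI)
  fix r s assume "r < dim_row (bl (X * Y))" "s < dim_col (bl (X * Y))"
  hence rs: "r < Suc a" "s < Suc c" using X Y by (auto simp: bl_def)
  have e: "(bl X * bl Y) $$ (r,s) = (\<Sum>k\<in>{0..<Suc b}. bl X $$ (r,k) * bl Y $$ (k,s))"
    by (rule mult_index[OF bl_carrier[OF X] bl_carrier[OF Y] rs])
  also have "\<dots> = bl X $$ (r,0) * bl Y $$ (0,s) + (\<Sum>k\<in>{0..<b}. bl X $$ (r,Suc k) * bl Y $$ (Suc k,s))"
    by (simp add: sum.atLeast0_lessThan_Suc_shift del: sum.op_ivl_Suc)
  also have "\<dots> = bl (X * Y) $$ (r,s)"
  proof (cases r)
    case 0
    have "(\<Sum>k\<in>{0..<b}. bl X $$ (r,Suc k) * bl Y $$ (Suc k,s)) = 0"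
      by (rule sum_zero_terms) (use 0 X in \<open>auto simp: bl_index\<close>)
    thus ?thesis using 0 rs X Y by (auto simp: bl_index)
  next
    case (Suc r')
    show ?thesis
    proof (cases s)
      case 0
      have "(\<Sum>k\<in>{0..<b}. bl X $$ (r,Suc k) * bl Y $$ (Suc k,s)) = 0"
        by (rule sum_zero_terms) (use 0 Y in \<open>auto simp: bl_index\<close>)
      thus ?thesis using 0 Suc rs X Y by (auto simp: bl_index)
    next
      case (Suc s')
      have "(\<Sum>k\<in>{0..<b}. bl X $$ (r,Suc k) * bl Y $$ (Suc k,s)) = (\<Sum>k\<in>{0..<b}. X $$ (r',k) * Y $$ (k,s'))"
        by (rule sum.cong) (use Suc \<open>r = Suc r'\<close> X Y rs in \<open>auto simp: bl_index\<close>)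
      also have "\<dots> = (X * Y) $$ (r',s')"
        by (rule mult_index[symmetric, OF X Y]) (use Suc \<open>r = Suc r'\<close> rs in auto)
      finally show ?thesis using Suc \<open>r = Suc r'\<close> rs X Y by (auto simp: bl_index)
    qed
  qed
  finally show "(bl X * bl Y) $$ (r,s) = bl (X * Y) $$ (r,s)" .
qed (use X Y in \<open>auto simp: bl_def\<close>)

lemma bl_one: "bl (1\<^sub>m n :: 'a::ring_1 mat) = 1\<^sub>m (Suc n)"
  by (rule eq_matI) (auto simp: bl_def)

lemma bl_invertible:
  fixes X :: "'a::ring_1 mat"
  assumes "invertible_mat X" "X \<in> carrier_mat n n"
  shows "invertible_mat (bl X)"
proof -
  obtain X' where X': "X' \<in> carrier_mat n n" "X * X' = 1\<^sub>m n" "X' * X = 1\<^sub>m n"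
    using invertible_inv[OF assms] by auto
  show ?thesis
    by (rule invertibleI[of _ "Suc n" "bl X'"])
       (auto simp: bl_mult[OF assms(2) X'(1)] bl_mult[OF X'(1) assms(2)] X' bl_one bl_carrier assms(2))
qed

lemma eqv_bl:
  assumes "eqv m n C (D :: 'a::ring_1 mat)"
  shows "eqv (Suc m) (Suc n) (bl C) (bl D)"
proof -
  obtain P Q where PQ: "P \<in> carrier_mat m m" "Q \<in> carrier_mat n n" "invertible_mat P" "invertible_mat Q" "D = P * C * Q"
    and C: "C \<in> carrier_mat m n" using assms unfolding eqv_def by blast
  have PC: "P * C \<in> carrier_mat m n" using PQ C by auto
  have "bl D = bl P * bl C * bl Q" unfolding PQ(5) bl_mult[OF PC PQ(2)] bl_mult[OF PQ(1) C] ..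
  moreover have "bl P \<in> carrier_mat (Suc m) (Suc m)" "bl Q \<in> carrier_mat (Suc n) (Suc n)"
    "bl C \<in> carrier_mat (Suc m) (Suc n)" "bl D \<in> carrier_mat (Suc m) (Suc n)"
    using PQ C eqv_carrier[OF assms] by (auto intro: bl_carrier)
  ultimately show ?thesis unfolding eqv_def using bl_invertible[OF PQ(3,1)] bl_invertible[OF PQ(4,2)]
    by blast
qed

definition Dg :: "nat \<Rightarrow> nat \<Rightarrow> nat \<Rightarrow> 'a::ring_1 \<Rightarrow> 'a mat" where
  "Dg m n k e = mat m n (\<lambda>(i,j). if i = j \<and> i < k then (if i + 1 < k then 1 else e) else 0)"

lemma bl_Dg: "bl (Dg m n k e) = Dg (Suc m) (Suc n) (Suc k) (if k = 0 then 1 else e)"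
  by (rule eq_matI) (auto simp: bl_def Dg_def)

lemma thmD:
  fixes A :: "'a::ring_1 mat"
  assumes dom: "is_domain TYPE('a)" and bez: "bezout_domain TYPE('a)" and ts: "two_simple TYPE('a)"
  shows "A \<in> carrier_mat m n \<Longrightarrow> \<exists>k e. k \<le> min m n \<and> eqv m n A (Dg m n k e)"
proof (induction m arbitrary: n A)
  case 0
  have "A = Dg 0 n 0 0" by (rule eq_matI) (use 0 in \<open>auto simp: Dg_def\<close>)
  thus ?case using eqv_refl[OF 0] by (intro exI[of _ 0]) auto
next
  case (Suc m)
  show ?case
  proof (cases n)
    case 0
    have "A = Dg (Suc m) n 0 0" by (rule eq_matI) (use 0 Suc in \<open>auto simp: Dg_def\<close>)
    thus ?thesis using eqv_refl[OF Suc.prems] by (intro exI[of _ 0]) auto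
  next
    case (Suc n')
    obtain B where B: "eqv (Suc m) n A B" "\<forall>i. 0 < i \<and> i < Suc m \<longrightarrow> B $$ (i,0) = 0"
      "\<forall>j. 0 < j \<and> j < n \<longrightarrow> B $$ (0,j) = 0"
      "B $$ (0,0) = 1 \<or> (\<forall>i j. i < Suc m \<and> j < n \<and> (0 < i \<or> 0 < j) \<longrightarrow> B $$ (i,j) = 0)"
      using MainRed[OF dom bez ts Suc.prems] Suc by auto
    have Bc: "B \<in> carrier_mat (Suc m) n" using eqv_carrier[OF B(1)] .
    show ?thesis
    proof (cases "B $$ (0,0) = 1")
      case True
      define C where "C = mat m n' (\<lambda>(i,j). B $$ (Suc i, Suc j))"
      have Cc: "C \<in> carrier_mat m n'" unfolding C_def by auto
      have BC: "B = bl C"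
      proof (rule eq_matI)
        fix i j assume ij: "i < dim_row (bl C)" "j < dim_col (bl C)"
        hence ij': "i < Suc m" "j < Suc n'" using Cc by (auto simp: bl_def)
        show "B $$ (i,j) = bl C $$ (i,j)"
          using ij' B(2,3) True Suc unfolding bl_def C_def
          by (cases i; cases j) auto
      qed (use Bc Cc Suc in \<open>auto simp: bl_def\<close>)
      obtain k e where ke: "k \<le> min m n'" "eqv m n' C (Dg m n' k e)" using Suc.IH[OF Cc] by blast
      have "eqv (Suc m) n B (Dg (Suc m) n (Suc k) (if k = 0 then 1 else e))"
        using eqv_bl[OF ke(2)] unfolding BC bl_Dg Suc .
      thus ?thesis using eqv_trans[OF B(1)] ke(1) Suc by (intro exI[of _ "Suc k"]) auto
    next
      case False
      have "B = Dg (Suc m) n 1 (B $$ (0,0))"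
      proof (rule eq_matI)
        fix i j assume ij: "i < dim_row (Dg (Suc m) n 1 (B $$ (0,0)))" "j < dim_col (Dg (Suc m) n 1 (B $$ (0,0)))"
        hence ij': "i < Suc m" "j < n" by (auto simp: Dg_def)
        show "B $$ (i,j) = Dg (Suc m) n 1 (B $$ (0,0)) $$ (i,j)"
          using ij' B(4) False unfolding Dg_def by auto
      qed (use Bc in \<open>auto simp: Dg_def\<close>)
      thus ?thesis using B(1) Suc by (intro exI[of _ 1] exI[of _ "B $$ (0,0)"]) auto
    qed
  qed
qed


section \<open>Two-sided ideals\<close>

lemma sum_concat:
  fixes f g :: "nat \<Rightarrow> 'a::comm_monoid_add"
  shows "(\<Sum>i<n1. f i) + (\<Sum>i<n2. g i) = (\<Sum>i<n1 + n2. if i < n1 then f i else g (i - n1))"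
proof (induction n2)
  case 0 thus ?case by (auto intro: sum.cong)
next
  case (Suc n2)
  have "(\<Sum>i<n1 + Suc n2. if i < n1 then f i else g (i - n1)) =
        (\<Sum>i<n1 + n2. if i < n1 then f i else g (i - n1)) + g n2" by simp
  thus ?case using Suc by (simp add: add.assoc[symmetric])
qed

lemma tsg_intro: "y = (\<Sum>i<(n::nat). r i * x * s i) \<Longrightarrow> y \<in> two_sided_gen x"
  unfolding two_sided_gen_def by blast

lemma tsg_ideal: "two_sided_ideal (two_sided_gen (x::'a::ring_1))"
  unfolding two_sided_ideal_def
proof (intro conjI ballI allI)
  show "0 \<in> two_sided_gen x" unfolding two_sided_gen_def by (rule CollectI, rule exI[of _ 0]) auto
next
  fix y z assume y: "y \<in> two_sided_gen x" and z: "z \<in> two_sided_gen x"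
  obtain n1 :: nat and r1 s1 where y': "y = (\<Sum>i<n1. r1 i * x * s1 i)" using y unfolding two_sided_gen_def by blast
  obtain n2 :: nat and r2 s2 where z': "z = (\<Sum>i<n2. r2 i * x * s2 i)" using z unfolding two_sided_gen_def by blast
  have "y + z = (\<Sum>i<n1 + n2. (if i < n1 then r1 i else r2 (i - n1)) * x * (if i < n1 then s1 i else s2 (i - n1)))"
    unfolding y' z' sum_concat by (rule sum.cong) auto
  thus "y + z \<in> two_sided_gen x" by (rule tsg_intro)
next
  fix y assume y: "y \<in> two_sided_gen x"
  obtain n1 :: nat and r1 s1 where y': "y = (\<Sum>i<n1. r1 i * x * s1 i)" using y unfolding two_sided_gen_def by blast
  have "- y = (\<Sum>i<n1. (- r1 i) * x * s1 i)" unfolding y' by (simp add: sum_negf)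
  thus "- y \<in> two_sided_gen x" by (rule tsg_intro)
next
  fix y r assume y: "y \<in> two_sided_gen x"
  obtain n1 :: nat and r1 s1 where y': "y = (\<Sum>i<n1. r1 i * x * s1 i)" using y unfolding two_sided_gen_def by blast
  have "r * y = (\<Sum>i<n1. (r * r1 i) * x * s1 i)" unfolding y' by (simp add: sum_distrib_left mult.assoc)
  thus "r * y \<in> two_sided_gen x" by (rule tsg_intro)
  have "y * r = (\<Sum>i<n1. r1 i * x * (s1 i * r))" unfolding y' by (simp add: sum_distrib_right mult.assoc)
  thus "y * r \<in> two_sided_gen x" by (rule tsg_intro)
qed

lemma one_in_tsg:
  assumes "simple_ring TYPE('a::ring_1)" "(y::'a) \<noteq> 0"
  shows "1 \<in> two_sided_gen y"
proof -
  have "y \<in> two_sided_gen y" unfolding two_sided_gen_def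
    by (rule CollectI, rule exI[of _ 1], rule exI[of _ "\<lambda>_. 1"], rule exI[of _ "\<lambda>_. 1"]) simp
  hence "two_sided_gen y \<noteq> {0}" using assms(2) by auto
  hence "two_sided_gen y = UNIV" using assms(1) tsg_ideal[of y] unfolding simple_ring_def by blast
  thus ?thesis by simp
qed

lemma forward:
  assumes simple: "simple_ring TYPE('a::ring_1)" and dom: "is_domain TYPE('a)"
    and DK: "DK_elementary_divisor_ring TYPE('a)"
  shows "two_simple TYPE('a)"
  unfolding two_simple_def
proof (intro allI impI)
  fix a :: 'a assume a0: "a \<noteq> 0"
  define A where "A = mat 2 2 (\<lambda>(i,j). if i = j then a else (0::'a))"
  have Ac: "A \<in> carrier_mat 2 2" unfolding A_def by auto
  obtain P Q k and eps :: "nat \<Rightarrow> 'a" where PQ: "P \<in> carrier_mat 2 2" "Q \<in> carrier_mat 2 2"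
    "invertible_mat P" "invertible_mat Q" "k \<le> min 2 2"
    "P * A * Q = mat 2 2 (\<lambda>(i, j). if i = j \<and> i < k then eps i else 0)"
    "\<forall>i. i + 1 < k \<longrightarrow> two_sided_gen (eps (i + 1)) \<subseteq> {eps i * r | r. True} \<inter> {r * eps i | r. True}"
    using DK[unfolded DK_elementary_divisor_ring_def, rule_format, OF Ac] by blast
  define D where "D = mat 2 2 (\<lambda>(i, j). if i = j \<and> i < k then eps i else (0::'a))"
  have Dc: "D \<in> carrier_mat 2 2" unfolding D_def by auto
  have PAQ: "P * A * Q = D" using PQ(6) unfolding D_def .
  obtain P' where P': "P' \<in> carrier_mat 2 2" "P * P' = 1\<^sub>m 2" "P' * P = 1\<^sub>m 2"
    using invertible_inv[OF PQ(3,1)] by auto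
  obtain Q' where Q': "Q' \<in> carrier_mat 2 2" "Q * Q' = 1\<^sub>m 2" "Q' * Q = 1\<^sub>m 2"
    using invertible_inv[OF PQ(4,2)] by auto
  have k2: "k = 2 \<and> eps 1 \<noteq> 0"
  proof (rule ccontr)
    assume nk: "\<not> (k = 2 \<and> eps 1 \<noteq> 0)"
    have D1: "D $$ (0,1) = 0" "D $$ (1,1) = 0" using nk PQ(5) unfolding D_def by auto
    have PA: "P * A \<in> carrier_mat 2 2" "A * Q \<in> carrier_mat 2 2" using PQ Ac by auto
    have "P' * D = P' * ((P * A) * Q)" unfolding PAQ ..
    also have "(P * A) * Q = P * (A * Q)" by (rule assoc_mult_mat[OF PQ(1) Ac PQ(2)])
    also have "P' * (P * (A * Q)) = (P' * P) * (A * Q)" by (rule assoc_mult_mat[symmetric, OF P'(1) PQ(1) PA(2)])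
    finally have PD0: "P' * D = (P' * P) * (A * Q)" .
    have PD: "P' * D = A * Q" unfolding PD0 P'(3) by (rule left_mult_one_mat[OF PA(2)])
    have QA: "a * Q $$ (s,1) = 0" if s: "s < 2" for s
    proof -
      have "(P' * D) $$ (s,1) = 0" using mult2_index[OF P'(1) Dc s, of 1] D1 by simp
      moreover have "(A * Q) $$ (s,1) = a * Q $$ (s,1)"
        using mult2_index[OF Ac PQ(2) s, of 1] s unfolding A_def
        by (cases "s = 0") (auto simp: numeral_2_eq_2 less_Suc_eq)
      ultimately show ?thesis using PD by simp
    qed
    have "Q $$ (0,1) = 0" "Q $$ (1,1) = 0" using QA[of 0] QA[of 1] a0 dom unfolding is_domain_def by auto
    hence "(Q' * Q) $$ (1,1) = 0" using mult2_index[OF Q'(1) PQ(2), of 1 1] by simp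
    thus False using Q'(3) dom_nontriv[OF dom] by simp
  qed
  have "1 \<in> two_sided_gen (eps (0 + 1))" using one_in_tsg[OF simple] k2 by simp
  moreover have "two_sided_gen (eps (0 + 1)) \<subseteq> {eps 0 * r | r. True} \<inter> {r * eps 0 | r. True}"
    using PQ(7) k2 by simp
  ultimately have "1 \<in> {eps 0 * r | r. True}" by blast
  then obtain r where r: "1 = eps 0 * r" by blast
  have "eps 0 = D $$ (0,0)" using k2 unfolding D_def by simp
  also have "\<dots> = (P * A) $$ (0,0) * Q $$ (0,0) + (P * A) $$ (0,1) * Q $$ (1,0)"
    unfolding PAQ[symmetric] using mult2_index[of "P * A" Q 0 0] PQ Ac by simp
  also have "(P * A) $$ (0,0) = P $$ (0,0) * a" using mult2_index[OF PQ(1) Ac, of 0 0] unfolding A_def by simp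
  also have "(P * A) $$ (0,1) = P $$ (0,1) * a" using mult2_index[OF PQ(1) Ac, of 0 1] unfolding A_def by simp
  finally have "P $$ (0,0) * a * (Q $$ (0,0) * r) + P $$ (0,1) * a * (Q $$ (1,0) * r) = 1"
    using r by (simp add: algebra_simps)
  thus "\<exists>u1 u2 v1 v2. u1 * a * v1 + u2 * a * v2 = 1" by blast
qed

theorem mainTheorem8:
  assumes "simple_ring TYPE('a::ring_1)"
    and "bezout_domain TYPE('a)"
  shows "DK_elementary_divisor_ring TYPE('a) \<longleftrightarrow>
    (\<forall>a::'a. a \<noteq> 0 \<longrightarrow> (\<exists>u1 u2 v1 v2. u1 * a * v1 + u2 * a * v2 = 1))"
proof -
  have dom: "is_domain TYPE('a)" using assms(2) unfolding bezout_domain_def by blast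
  show ?thesis
  proof
    assume "DK_elementary_divisor_ring TYPE('a)"
    thus "\<forall>a::'a. a \<noteq> 0 \<longrightarrow> (\<exists>u1 u2 v1 v2. u1 * a * v1 + u2 * a * v2 = 1)"
      using forward[OF assms(1) dom] unfolding two_simple_def by blast
  next
    assume "\<forall>a::'a. a \<noteq> 0 \<longrightarrow> (\<exists>u1 u2 v1 v2. u1 * a * v1 + u2 * a * v2 = 1)"
    hence ts: "two_simple TYPE('a)" unfolding two_simple_def by blast
    show "DK_elementary_divisor_ring TYPE('a)"
      unfolding DK_elementary_divisor_ring_def
    proof (intro allI impI)
      fix m n and A :: "'a mat" assume A: "A \<in> carrier_mat m n"
      obtain k e where ke: "k \<le> min m n" "eqv m n A (Dg m n k e)"
        using thmD[OF dom assms(2) ts A] by blast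
      obtain P Q where PQ: "P \<in> carrier_mat m m" "Q \<in> carrier_mat n n" "invertible_mat P" "invertible_mat Q"
        "Dg m n k e = P * A * Q" using ke(2) unfolding eqv_def by blast
      let ?eps = "\<lambda>i. if i + 1 < k then 1 else e"
      have M: "P * A * Q = mat m n (\<lambda>(i, j). if i = j \<and> i < k then ?eps i else 0)"
        using PQ(5) unfolding Dg_def by simp
      have C1: "\<forall>i. i + 1 < k \<longrightarrow> two_sided_gen (?eps (i + 1)) \<subseteq> {?eps i * r | r. True} \<inter> {r * ?eps i | r. True}"
        by auto
      have C2: "\<forall>i. i + 1 < k \<longrightarrow> invariant_elem (?eps i)"
        using dom_nontriv[OF dom] unfolding invariant_elem_def by auto
      show "\<exists>P Q k (eps::nat \<Rightarrow> 'a).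
           P \<in> carrier_mat m m \<and> Q \<in> carrier_mat n n \<and>
           invertible_mat P \<and> invertible_mat Q \<and>
           k \<le> min m n \<and>
           P * A * Q = mat m n (\<lambda>(i, j). if i = j \<and> i < k then eps i else 0) \<and>
           (\<forall>i. i + 1 < k \<longrightarrow>
              two_sided_gen (eps (i + 1)) \<subseteq> {eps i * r | r. True} \<inter> {r * eps i | r. True}) \<and>
           (\<forall>i. i + 1 < k \<longrightarrow> invariant_elem (eps i))"
        by (rule exI[of _ P], rule exI[of _ Q], rule exI[of _ k], rule exI[of _ ?eps])
           (intro conjI PQ(1-4) ke(1) M C1 C2)
    qed
  qed
qed

end
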